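(* In the setting below, if $N\ge4$ then the $H$-skeleton $B=X^H$ is a $p$-robust random 0–1 matrix with $p=2/N$. Setting: $G$ is a graph on $N$ vertices with edges $e_1,\dots,e_m$; $G_k$ has the same vertices and edge set $\{e_1,\dots,e_k\}$; fix $0\le k\le m-1$, $S=\mathcal I(G_k)$, $H=\mathcal I(G_{k+1})$, and $n\ge1$. Initial states $A_1,\dots,A_n\in S$ have arbitrary joint distribution; for each $i\in[n]$ the BIDC chain on $G_k$ is run from $A_i$ for $n$ steps with fresh randomness independent across steps, chains and initial states, giving $X_{i0}=A_i,X_{i1},\dots,X_{in}$; $X$ is the $n\times n$ matrix with $i$-th row $(X_{i1},\dots,X_{in})$.
   Context: $\mathcal I(F)$ is the family of independent sets (including $\emptyset$) of a graph $F$. BIDC on $F=(V,E)$: from $X_t$ draw $u\in V$ uniformly; $X_{t+1}=X_t\setminus\{u\}$ if $u\in X_t$; $X_{t+1}=X_t\cup\{u\}$ if $u\notin X_t$ and $X_t\cup\{u\}\in\mathcal I(F)$; else $X_{t+1}=X_t$. The $H$-skeleton $X^H$ is the 0–1 matrix with entry $1$ iff $X_{ij}\in H$. In an $n\times n$ matrix, entry $(i,j)$ precedes $(k,\ell)$, written $(i,j)\prec(k,\ell)$, if $i<k$, or $i=k$ and $j<\ell$. A random 0–1 matrix $Y=[\xi_{ij}]$ is $p$-robust ($p\in(0,1)$) if for every $(i,j)$, every set of preceding positions $(i_1,j_1),\dots,(i_r,j_r)\prec(i,j)$ and every $a_1,\dots,a_r\in\{0,1\}$ with $\Pr(\xi_{i_1j_1}=a_1,\dots,\xi_{i_rj_r}=a_r)>0$,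 we have $\Pr(\xi_{ij}=1\mid \xi_{i_1j_1}=a_1,\dots,\xi_{i_rj_r}=a_r)\ge p$ (and $\Pr(\xi_{ij}=1)\ge p$ unconditionally). *)

theory Defs
  imports "HOL-Probability.Probability"
begin

text \<open>A simple graph is given by a finite vertex set V and a set E of edges,
each edge being a 2-element subset of V.  Independent sets (including the empty set):\<close>
definition indep_sets :: "'a set \<Rightarrow> 'a set set \<Rightarrow> 'a set set" where
  "indep_sets V E = {I. I \<subseteq> V \<and> (\<forall>e\<in>E. \<not> e \<subseteq> I)}"

definition bidc_move :: "'a set \<Rightarrow> 'a set set \<Rightarrow> 'a set \<Rightarrow> 'a \<Rightarrow> 'a set" where
  "bidc_move V E X u =
     (if u \<in> X then X - {u}
      else if insert u X \<in> indep_sets V E then insert u X else X)"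

fun bidc_run :: "'a set \<Rightarrow> 'a set set \<Rightarrow> 'a set \<Rightarrow> (nat \<Rightarrow> 'a) \<Rightarrow> nat \<Rightarrow> 'a set" where
  "bidc_run V E A us 0 = A"
| "bidc_run V E A us (Suc j) = bidc_move V E (bidc_run V E A us j) (us (Suc j))"

definition positions :: "nat \<Rightarrow> (nat \<times> nat) set" where
  "positions n = {1..n} \<times> {1..n}"

definition prec :: "nat \<times> nat \<Rightarrow> nat \<times> nat \<Rightarrow> bool" where
  "prec q q' \<longleftrightarrow> fst q < fst q' \<or> (fst q = fst q' \<and> snd q < snd q')"

text \<open>Entries outside [n]x[n] are set to {} (irrelevant).\<close>
definition bidc_matrix ::
  "'a set \<Rightarrow> 'a set set \<Rightarrow> nat \<Rightarrow> (nat \<Rightarrow> 'a set) pmf \<Rightarrow> (nat \<times> nat \<Rightarrow> 'a set) pmf" where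
  "bidc_matrix V E n mu =
     do { A \<leftarrow> mu;
          U \<leftarrow> Pi_pmf (positions n) undefined (\<lambda>_. pmf_of_set V);
          return_pmf (\<lambda>(i, j). if (i, j) \<in> positions n
                                then bidc_run V E (A i) (\<lambda>t. U (i, t)) j else {}) }"

definition skeleton :: "nat \<Rightarrow> 'a set set \<Rightarrow> (nat \<times> nat \<Rightarrow> 'a set) pmf \<Rightarrow> (nat \<times> nat \<Rightarrow> bool) pmf" where
  "skeleton n H Xd = map_pmf (\<lambda>X q. q \<in> positions n \<and> X q \<in> H) Xd"

text \<open>p-robustness of a random n x n 0-1 matrix Y (True = 1).  P ranges over sets of
  positions preceding (i,j) (P = {} gives the unconditional requirement).\<close>
definition p_robust :: "nat \<Rightarrow> real \<Rightarrow> (nat \<times> nat \<Rightarrow> bool) pmf \<Rightarrow> bool" where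
  "p_robust n p Y \<longleftrightarrow>
     (\<forall>q \<in> positions n. \<forall>P a.
        P \<subseteq> {q' \<in> positions n. prec q' q} \<longrightarrow>
        measure_pmf.prob Y {y. \<forall>r\<in>P. y r = a r} > 0 \<longrightarrow>
        measure_pmf.prob Y {y. y q \<and> (\<forall>r\<in>P. y r = a r)}
          / measure_pmf.prob Y {y. \<forall>r\<in>P. y r = a r} \<ge> p)"

end

theory Submission
  imports Defs
begin

lemma move_indep:
  assumes "Z \<in> indep_sets V E" shows "bidc_move V E Z u \<in> indep_sets V E"
  using assms unfolding bidc_move_def indep_sets_def by auto

lemma run_indep:
  assumes "A \<in> indep_sets V E" shows "bidc_run V E A us j \<in> indep_sets V E"
  using assms by (induction j) (auto intro: move_indep)

lemma run_cong:
  assumes "\<And>t. 1 \<le> t \<Longrightarrow> t \<le> j \<Longrightarrow> us t = us' t"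
  shows "bidc_run V E A us j = bidc_run V E A us' j"
  using assms by (induction j) auto

lemma indep_ins':
  "indep_sets V (insert {x,y} E) = {I \<in> indep_sets V E. \<not> {x,y} \<subseteq> I}"
  unfolding indep_sets_def by auto

lemma indep_ins:
  "indep_sets V (E \<union> {{x,y}}) = {I \<in> indep_sets V E. \<not> {x,y} \<subseteq> I}"
  unfolding indep_sets_def by auto

lemma good_moves:
  assumes "finite V" "card V \<ge> 3" "x \<noteq> y" "x \<in> V" "y \<in> V" "Z \<in> indep_sets V E"
  shows "2 \<le> card {u\<in>V. bidc_move V E Z u \<in> indep_sets V (E \<union> {{x,y}})}"
proof -
  let ?G = "{u\<in>V. bidc_move V E Z u \<in> indep_sets V (E \<union> {{x,y}})}"
  have mi: "\<And>u. bidc_move V E Z u \<in> indep_sets V E" using move_indep[OF assms(6)] by blast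
  have rem: "\<And>u. u \<in> Z \<Longrightarrow> u \<notin> bidc_move V E Z u" unfolding bidc_move_def by auto
  have keep: "\<And>u w. w \<notin> Z \<Longrightarrow> u \<noteq> w \<Longrightarrow> w \<notin> bidc_move V E Z u" unfolding bidc_move_def by auto
  have ex: "\<exists>u1 u2. u1 \<in> ?G \<and> u2 \<in> ?G \<and> u1 \<noteq> u2"
  proof -
    obtain w where w: "w \<in> V" "w \<noteq> x" "w \<noteq> y"
    proof -
      have "card {x,y} < card V" using assms by simp
      then have "\<not> V \<subseteq> {x,y}" using assms(1) card_mono by (metis finite.emptyI finite_insert leD)
      then show ?thesis using that by auto
    qed
    have gI: "u \<in> ?G" if "u \<in> V" "x \<notin> bidc_move V E Z u \<or> y \<notin> bidc_move V E Z u" for u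
      using that mi[of u] by (auto simp: indep_ins')
    show ?thesis
    proof (cases "x \<in> Z")
      case True
      have g1: "x \<in> ?G" using gI[of x] rem[OF True] assms by auto
      show ?thesis
      proof (cases "y \<in> Z")
        case True
        have "y \<in> ?G" using gI[of y] rem[OF True] assms by auto
        then show ?thesis using g1 assms by blast
      next
        case False
        have "w \<in> ?G" using gI[of w] keep[OF False, of w] w by auto
        then show ?thesis using g1 w by blast
      qed
    next
      case False
      show ?thesis
      proof (cases "y \<in> Z")
        case True
        have g1: "y \<in> ?G" using gI[of y] rem[OF True] assms by auto
        have "w \<in> ?G" using gI[of w] keep[OF False, of w] w by auto
        then show ?thesis using g1 w by blast
      next
        case False
        have "y \<in> ?G" using gI[of y] keep[OF \<open>x \<notin> Z\<close>, of y] assms by auto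
        moreover have "x \<in> ?G" using gI[of x] keep[OF False, of x] assms by auto
        ultimately show ?thesis using assms by blast
      qed
    qed
  qed
  then obtain u1 u2 where "u1 \<in> ?G" "u2 \<in> ?G" "u1 \<noteq> u2" by blast
  then have "{u1,u2} \<subseteq> ?G" by auto
  moreover have "finite ?G" using assms(1) by simp
  ultimately have "card {u1,u2} \<le> card ?G" by (rule card_mono[rotated])
  then show ?thesis using \<open>u1 \<noteq> u2\<close> by simp
qed

lemma bind_ineq:
  assumes "\<And>x. x \<in> set_pmf p \<Longrightarrow> ennreal c * emeasure (measure_pmf (f x)) S2 \<le> emeasure (measure_pmf (f x)) S1"
  shows "ennreal c * emeasure (measure_pmf (bind_pmf p f)) S2 \<le> emeasure (measure_pmf (bind_pmf p f)) S1"
proof -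
  have "ennreal c * emeasure (measure_pmf (bind_pmf p f)) S2 = (\<integral>\<^sup>+x. ennreal c * emeasure (f x) S2 \<partial>p)"
    by (simp add: nn_integral_cmult)
  also have "\<dots> \<le> (\<integral>\<^sup>+x. emeasure (f x) S1 \<partial>p)"
    by (rule nn_integral_mono_AE) (simp add: AE_measure_pmf_iff assms)
  finally show ?thesis by simp
qed


lemma main:
  fixes V :: "'a set" and mu :: "(nat \<Rightarrow> 'a set) pmf"
  assumes "finite V" "card V = N" "N \<ge> 4" "x \<noteq> y" "x \<in> V" "y \<in> V"
    and Heq: "H = indep_sets V (E0 \<union> {{x,y}})"
    and muA: "\<forall>A \<in> set_pmf mu. \<forall>i \<in> {1..n}. A i \<in> indep_sets V E0"
  shows "p_robust n (2 / real N) (skeleton n H (bidc_matrix V E0 n mu))"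
  unfolding p_robust_def
proof (intro ballI allI impI)
  fix q P and a :: "nat \<times> nat \<Rightarrow> bool"
  assume q: "q \<in> positions n" and P: "P \<subseteq> {q' \<in> positions n. prec q' q}"
  let ?Y = "skeleton n H (bidc_matrix V E0 n mu)"
  assume pos: "measure_pmf.prob ?Y {y. \<forall>r\<in>P. y r = a r} > 0"
  define c where "c = 2 / real N"
  define PV where "PV = pmf_of_set V"
  define F where "F = (\<lambda>A (U :: nat \<times> nat \<Rightarrow> 'a). (\<lambda>(i, j). if (i, j) \<in> positions n
                                then bidc_run V E0 (A i) (\<lambda>t. U (i, t)) j else {}))"
  define sk where "sk = (\<lambda>X q. q \<in> positions n \<and> X q \<in> H)"
  define Pi' where "Pi' = Pi_pmf (positions n - {q}) undefined (\<lambda>_. PV)"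
  define S1 where "S1 = {y. y q \<and> (\<forall>r\<in>P. y r = a r)}"
  define S2 where "S2 = {y. \<forall>r\<in>P. y r = a r}"
  obtain i j where qij: "q = (i, j)" "i \<in> {1..n}" "j \<in> {1..n}" using q unfolding positions_def by auto
  have fin: "finite (positions n)" unfolding positions_def by simp
  have PiEq: "Pi_pmf (positions n) undefined (\<lambda>_. PV) = bind_pmf Pi' (\<lambda>f. map_pmf (\<lambda>u. f(q:=u)) PV)"
  proof -
    have "positions n = insert q (positions n - {q})" using q by auto
    then have "Pi_pmf (positions n) undefined (\<lambda>_. PV) = Pi_pmf (insert q (positions n - {q})) undefined (\<lambda>_. PV)"
      by simp
    also have "\<dots> = bind_pmf PV (\<lambda>u. bind_pmf Pi' (\<lambda>f. return_pmf (f(q:=u))))"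
      unfolding Pi'_def by (subst Pi_pmf_insert') (use fin in auto)
    also have "\<dots> = bind_pmf Pi' (\<lambda>f. map_pmf (\<lambda>u. f(q:=u)) PV)"
      by (subst bind_commute_pmf) (simp add: map_pmf_def)
    finally show ?thesis .
  qed
  have YEq: "?Y = bind_pmf mu (\<lambda>A. bind_pmf Pi' (\<lambda>f. map_pmf (\<lambda>u. sk (F A (f(q:=u)))) PV))"
    unfolding skeleton_def bidc_matrix_def PV_def[symmetric] PiEq
    unfolding F_def sk_def
    by (simp add: map_bind_pmf bind_assoc_pmf bind_map_pmf bind_return_pmf map_pmf_comp) (simp add: map_pmf_def)
  have key: "ennreal c * emeasure (measure_pmf ?Y) S2 \<le> emeasure (measure_pmf ?Y) S1"
    unfolding YEq
  proof (intro bind_ineq)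
    fix A f assume A: "A \<in> set_pmf mu"
    define G where "G = (\<lambda>u. sk (F A (f(q:=u))))"
    have evc: "(\<forall>r\<in>P. G u r = a r) = (\<forall>r\<in>P. sk (F A f) r = a r)" for u
    proof -
      have "G u r = sk (F A f) r" if r: "r \<in> P" for r
      proof -
        obtain r1 r2 where rr: "r = (r1, r2)" by (cases r)
        have "prec r q" "r \<in> positions n" using r P by auto
        then have "r1 < i \<or> (r1 = i \<and> r2 < j)" using rr qij unfolding prec_def by auto
        then have "bidc_run V E0 (A r1) (\<lambda>t. (f(q:=u)) (r1, t)) r2 = bidc_run V E0 (A r1) (\<lambda>t. f (r1, t)) r2"
          by (intro run_cong) (auto simp: qij)
        then show ?thesis unfolding G_def sk_def F_def rr by simp
      qed
      then show ?thesis by auto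
    qed
    obtain j' where j': "j = Suc j'" using qij by (cases j) auto
    define Z where "Z = bidc_run V E0 (A i) (\<lambda>t. f (i, t)) j'"
    have yq: "G u q = (bidc_move V E0 Z u \<in> H)" for u
    proof -
      have "bidc_run V E0 (A i) (\<lambda>t. (f(q:=u)) (i, t)) j' = Z"
        unfolding Z_def by (intro run_cong) (auto simp: qij j')
      then show ?thesis using q unfolding G_def sk_def F_def qij j' by simp
    qed
    have Z: "Z \<in> indep_sets V E0" unfolding Z_def using muA A qij by (intro run_indep) auto
    have Vne: "V \<noteq> {}" using assms by auto
    have N0: "real N > 0" using assms by simp
    show "ennreal c * emeasure (measure_pmf (map_pmf G PV)) S2 \<le> emeasure (measure_pmf (map_pmf G PV)) S1"
    proof (cases "\<forall>r\<in>P. sk (F A f) r = a r")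
      case True
      have pre2: "G -` S2 = UNIV" using True evc unfolding S2_def by auto
      have pre1: "G -` S1 = {u. bidc_move V E0 Z u \<in> H}" using True evc yq unfolding S1_def by auto
      have m2: "measure PV (G -` S2) = 1" unfolding pre2 PV_def
        using measure_pmf_of_set[OF Vne \<open>finite V\<close>] Vne \<open>finite V\<close> by (simp add: card_gt_0_iff)
      have c3: "3 \<le> card V" using assms by simp
      have cg0: "2 \<le> card {u\<in>V. bidc_move V E0 Z u \<in> H}"
        unfolding Heq by (rule good_moves[OF \<open>finite V\<close> c3 \<open>x \<noteq> y\<close> \<open>x \<in> V\<close> \<open>y \<in> V\<close> Z])
      have "{u\<in>V. bidc_move V E0 Z u \<in> H} = V \<inter> {u. bidc_move V E0 Z u \<in> H}" by blast
      then have cg: "2 \<le> card (V \<inter> {u. bidc_move V E0 Z u \<in> H})" using cg0 by simp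
      have "c \<le> measure PV (G -` S1)" unfolding pre1 PV_def c_def
        using measure_pmf_of_set[OF Vne \<open>finite V\<close>] assms cg N0
        by (simp add: divide_right_mono)
      then show ?thesis
        by (simp add: measure_pmf.emeasure_eq_measure m2 ennreal_leI)
    next
      case False
      have pre2: "G -` S2 = {}" using False evc unfolding S2_def by auto
      show ?thesis by (simp add: measure_pmf.emeasure_eq_measure pre2)
    qed
  qed
  have "c * measure_pmf.prob ?Y S2 \<le> measure_pmf.prob ?Y S1"
    using key unfolding measure_pmf.emeasure_eq_measure c_def
    by (simp add: ennreal_mult[symmetric])
  then show "2 / real N \<le> measure_pmf.prob ?Y {y. y q \<and> (\<forall>r\<in>P. y r = a r)} / measure_pmf.prob ?Y {y. \<forall>r\<in>P. y r = a r}"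
    using pos unfolding S1_def S2_def c_def by (simp add: pos_le_divide_eq)
qed

theorem lemma4:
  fixes V :: "'a set" and es :: "'a set list" and N k n :: nat
    and mu :: "(nat \<Rightarrow> 'a set) pmf"
  assumes "finite V" and "card V = N" and "N \<ge> 4"
    and "distinct es" and "\<forall>e \<in> set es. e \<subseteq> V \<and> card e = 2"
    and "k < length es"
    and "n \<ge> 1"
    and "\<forall>A \<in> set_pmf mu. \<forall>i \<in> {1..n}. A i \<in> indep_sets V (set (take k es))"
  shows "p_robust n (2 / real N)
           (skeleton n (indep_sets V (set (take (Suc k) es)))
              (bidc_matrix V (set (take k es)) n mu))"
proof -
  have ek: "es ! k \<in> set es" using assms(6) by simp
  then have "card (es ! k) = 2" "es ! k \<subseteq> V" using assms(5) by auto
  then obtain x y where xy: "es ! k = {x, y}" "x \<noteq> y" by (auto simp: card_2_iff)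
  have xyV: "x \<in> V" "y \<in> V" using \<open>es ! k \<subseteq> V\<close> xy by auto
  have "set (take (Suc k) es) = set (take k es) \<union> {{x,y}}"
    using assms(6) xy by (simp add: take_Suc_conv_app_nth)
  then show ?thesis
    by (intro main[OF assms(1,2,3) xy(2) xyV _ assms(8)]) simp
qed

end
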